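(* Let $\Gamma:=\mathrm{Cos}(G,H,A)$ be a vertex-transitive graph and let $B$ be a subset of $A$. If every $\varphi\in\mathrm{Aut}(\Gamma)_H$ fixes the set $\{Hx\mid x\in B\}$ pointwise, then every $\varphi\in\mathrm{Aut}(\Gamma)_H$ fixes the set $\{Hx\mid x\in\langle B\rangle\}$ pointwise.
   Context: $G$ is a finite group, $H\le G$, and $A\subseteq G$ is a union of $(H,H)$-double cosets with $A=A^{-1}$. The coset graph $\mathrm{Cos}(G,H,A)$ has vertex set the right cosets of $H$ in $G$, with $Hx$ adjacent to $Hy$ iff $yx^{-1}\in A$. $\mathrm{Aut}(\Gamma)_H$ denotes the stabilizer in $\mathrm{Aut}(\Gamma)$ of the vertex $H$. *)

theory Defs
  imports "HOL-Algebra.Algebra"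
begin

definition cos_adj :: "('a, 'b) monoid_scheme \<Rightarrow> 'a set \<Rightarrow> 'a set \<Rightarrow> 'a set \<Rightarrow> 'a set \<Rightarrow> bool" where
  "cos_adj G H A U W \<longleftrightarrow>
     (\<exists>x \<in> carrier G. \<exists>y \<in> carrier G.
        U = H #>\<^bsub>G\<^esub> x \<and> W = H #>\<^bsub>G\<^esub> y \<and> y \<otimes>\<^bsub>G\<^esub> inv\<^bsub>G\<^esub> x \<in> A)"

definition cos_aut :: "('a, 'b) monoid_scheme \<Rightarrow> 'a set \<Rightarrow> 'a set \<Rightarrow> ('a set \<Rightarrow> 'a set) set" where
  "cos_aut G H A =
     {f. bij_betw f (rcosets\<^bsub>G\<^esub> H) (rcosets\<^bsub>G\<^esub> H) \<and>
         (\<forall>U \<in> rcosets\<^bsub>G\<^esub> H. \<forall>W \<in> rcosets\<^bsub>G\<^esub> H.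
            cos_adj G H A U W \<longleftrightarrow> cos_adj G H A (f U) (f W))}"

definition cos_aut_stab :: "('a, 'b) monoid_scheme \<Rightarrow> 'a set \<Rightarrow> 'a set \<Rightarrow> ('a set \<Rightarrow> 'a set) set" where
  "cos_aut_stab G H A = {f \<in> cos_aut G H A. f H = H}"

definition cos_vertex_transitive :: "('a, 'b) monoid_scheme \<Rightarrow> 'a set \<Rightarrow> 'a set \<Rightarrow> bool" where
  "cos_vertex_transitive G H A \<longleftrightarrow>
     (\<forall>U \<in> rcosets\<^bsub>G\<^esub> H. \<forall>W \<in> rcosets\<^bsub>G\<^esub> H. \<exists>f \<in> cos_aut G H A. f U = W)"

definition union_double_cosets :: "('a, 'b) monoid_scheme \<Rightarrow> 'a set \<Rightarrow> 'a set \<Rightarrow> bool" where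
  "union_double_cosets G H A \<longleftrightarrow> A \<subseteq> carrier G \<and>
     (\<forall>a \<in> A. \<forall>h1 \<in> H. \<forall>h2 \<in> H. h1 \<otimes>\<^bsub>G\<^esub> a \<otimes>\<^bsub>G\<^esub> h2 \<in> A)"

end

theory Submission
  imports Defs
begin

lemma rmul_rcos:
  assumes "group G" "subgroup H G" "g \<in> carrier G" "U \<in> rcosets\<^bsub>G\<^esub> H"
  shows "U #>\<^bsub>G\<^esub> g \<in> rcosets\<^bsub>G\<^esub> H"
proof -
  interpret group G by fact
  from assms(4) obtain x where x: "x \<in> carrier G" "U = H #>\<^bsub>G\<^esub> x" unfolding RCOSETS_def by auto
  have "U #>\<^bsub>G\<^esub> g = H #>\<^bsub>G\<^esub> (x \<otimes>\<^bsub>G\<^esub> g)" using x assms(2,3) by (simp add: coset_mult_assoc subgroup.subset)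
  thus ?thesis using x assms(3) unfolding RCOSETS_def by auto
qed

lemma rmul_back:
  assumes "group G" "subgroup H G" "g \<in> carrier G" "U \<in> rcosets\<^bsub>G\<^esub> H"
  shows "(U #>\<^bsub>G\<^esub> g) #>\<^bsub>G\<^esub> inv\<^bsub>G\<^esub> g = U"
proof -
  interpret group G by fact
  from assms(4) obtain x where x: "x \<in> carrier G" "U = H #>\<^bsub>G\<^esub> x" unfolding RCOSETS_def by auto
  have "U \<subseteq> carrier G" using x assms(2) by (simp add: r_coset_subset_G subgroup.subset)
  thus ?thesis using assms(3) by (simp add: coset_mult_assoc)
qed

lemma rmul_adj:
  assumes "group G" "subgroup H G" "g \<in> carrier G" "cos_adj G H A U W"
  shows "cos_adj G H A (U #>\<^bsub>G\<^esub> g) (W #>\<^bsub>G\<^esub> g)"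
proof -
  interpret group G by fact
  from assms(4) obtain x y where xy: "x \<in> carrier G" "y \<in> carrier G" "U = H #>\<^bsub>G\<^esub> x" "W = H #>\<^bsub>G\<^esub> y"
    "y \<otimes>\<^bsub>G\<^esub> inv\<^bsub>G\<^esub> x \<in> A" unfolding cos_adj_def by auto
  have s: "H \<subseteq> carrier G" using assms(2) subgroup.subset by blast
  have "(y \<otimes>\<^bsub>G\<^esub> g) \<otimes>\<^bsub>G\<^esub> inv\<^bsub>G\<^esub> (x \<otimes>\<^bsub>G\<^esub> g) = y \<otimes>\<^bsub>G\<^esub> inv\<^bsub>G\<^esub> x" using xy assms(3)
    by (simp add: inv_mult_group m_assoc, simp add: m_assoc[symmetric])
  moreover have "U #>\<^bsub>G\<^esub> g = H #>\<^bsub>G\<^esub> (x \<otimes>\<^bsub>G\<^esub> g)" "W #>\<^bsub>G\<^esub> g = H #>\<^bsub>G\<^esub> (y \<otimes>\<^bsub>G\<^esub> g)"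
    using xy s assms(3) by (simp_all add: coset_mult_assoc)
  ultimately show ?thesis unfolding cos_adj_def using xy assms(3) by force
qed

lemma rmul_aut:
  assumes "group G" "subgroup H G" "g \<in> carrier G"
  shows "(\<lambda>U. U #>\<^bsub>G\<^esub> g) \<in> cos_aut G H A"
proof -
  interpret group G by fact
  have ig: "inv\<^bsub>G\<^esub> g \<in> carrier G" using assms(3) by simp
  have igg: "inv\<^bsub>G\<^esub> (inv\<^bsub>G\<^esub> g) = g" using assms(3) by simp
  have bij: "bij_betw (\<lambda>U. U #>\<^bsub>G\<^esub> g) (rcosets\<^bsub>G\<^esub> H) (rcosets\<^bsub>G\<^esub> H)"
  proof (rule bij_betw_byWitness[where f' = "\<lambda>U. U #>\<^bsub>G\<^esub> inv\<^bsub>G\<^esub> g"])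
    show "\<forall>a\<in>rcosets\<^bsub>G\<^esub> H. a #>\<^bsub>G\<^esub> g #>\<^bsub>G\<^esub> inv\<^bsub>G\<^esub> g = a" using rmul_back[OF assms] by blast
    show "\<forall>a\<in>rcosets\<^bsub>G\<^esub> H. a #>\<^bsub>G\<^esub> inv\<^bsub>G\<^esub> g #>\<^bsub>G\<^esub> g = a" using rmul_back[OF assms(1,2) ig] unfolding igg by blast
    show "(\<lambda>U. U #>\<^bsub>G\<^esub> g) ` (rcosets\<^bsub>G\<^esub> H) \<subseteq> rcosets\<^bsub>G\<^esub> H" using rmul_rcos[OF assms] by blast
    show "(\<lambda>U. U #>\<^bsub>G\<^esub> inv\<^bsub>G\<^esub> g) ` (rcosets\<^bsub>G\<^esub> H) \<subseteq> rcosets\<^bsub>G\<^esub> H" using rmul_rcos[OF assms(1,2) ig] by blast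
  qed
  have "cos_adj G H A U W \<longleftrightarrow> cos_adj G H A (U #>\<^bsub>G\<^esub> g) (W #>\<^bsub>G\<^esub> g)"
    if "U \<in> rcosets\<^bsub>G\<^esub> H" "W \<in> rcosets\<^bsub>G\<^esub> H" for U W
  proof
    assume "cos_adj G H A U W" thus "cos_adj G H A (U #>\<^bsub>G\<^esub> g) (W #>\<^bsub>G\<^esub> g)" using rmul_adj[OF assms] by blast
  next
    assume "cos_adj G H A (U #>\<^bsub>G\<^esub> g) (W #>\<^bsub>G\<^esub> g)"
    hence "cos_adj G H A (U #>\<^bsub>G\<^esub> g #>\<^bsub>G\<^esub> inv\<^bsub>G\<^esub> g) (W #>\<^bsub>G\<^esub> g #>\<^bsub>G\<^esub> inv\<^bsub>G\<^esub> g)" using rmul_adj[OF assms(1,2) ig] by blast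
    moreover have "U #>\<^bsub>G\<^esub> g #>\<^bsub>G\<^esub> inv\<^bsub>G\<^esub> g = U" using rmul_back[OF assms that(1)] .
    moreover have "W #>\<^bsub>G\<^esub> g #>\<^bsub>G\<^esub> inv\<^bsub>G\<^esub> g = W" using rmul_back[OF assms that(2)] .
    ultimately show "cos_adj G H A U W" by simp
  qed
  thus ?thesis using bij unfolding cos_aut_def by blast
qed

lemma comp_aut:
  assumes "f \<in> cos_aut G H A" "h \<in> cos_aut G H A"
  shows "f \<circ> h \<in> cos_aut G H A"
proof -
  have bf: "bij_betw f (rcosets\<^bsub>G\<^esub> H) (rcosets\<^bsub>G\<^esub> H)" and bh: "bij_betw h (rcosets\<^bsub>G\<^esub> H) (rcosets\<^bsub>G\<^esub> H)"
    using assms unfolding cos_aut_def by auto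
  have "\<forall>U \<in> rcosets\<^bsub>G\<^esub> H. h U \<in> rcosets\<^bsub>G\<^esub> H" using bh bij_betwE by blast
  thus ?thesis using assms bij_betw_trans[OF bh bf] unfolding cos_aut_def by auto
qed

theorem lemma3p5:
  fixes G :: "('a, 'b) monoid_scheme" and H A B :: "'a set"
  assumes "group G" and "finite (carrier G)"
    and "subgroup H G"
    and "union_double_cosets G H A"
    and "(\<lambda>a. inv\<^bsub>G\<^esub> a) ` A = A"
    and "cos_vertex_transitive G H A"
    and "B \<subseteq> A"
    and "\<forall>\<phi> \<in> cos_aut_stab G H A. \<forall>x \<in> B. \<phi> (H #>\<^bsub>G\<^esub> x) = H #>\<^bsub>G\<^esub> x"
  shows "\<forall>\<phi> \<in> cos_aut_stab G H A. \<forall>x \<in> generate G B. \<phi> (H #>\<^bsub>G\<^esub> x) = H #>\<^bsub>G\<^esub> x"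
proof -
  interpret group G by fact
  have Bc: "B \<subseteq> carrier G" using assms(4,7) unfolding union_double_cosets_def by auto
  have Hs: "H \<subseteq> carrier G" using assms(3) subgroup.subset by blast
  define S where "S = {g \<in> carrier G. \<forall>\<phi> \<in> cos_aut_stab G H A. \<phi> (H #>\<^bsub>G\<^esub> g) = H #>\<^bsub>G\<^esub> g}"
  have Sc: "S \<subseteq> carrier G" unfolding S_def by auto
  have stepB: "b \<otimes>\<^bsub>G\<^esub> g \<in> S" if b: "b \<in> B" and g: "g \<in> S" for b g
  proof -
    have bc: "b \<in> carrier G" using b Bc by auto
    have gc: "g \<in> carrier G" using g Sc by auto
    have "\<phi> (H #>\<^bsub>G\<^esub> (b \<otimes>\<^bsub>G\<^esub> g)) = H #>\<^bsub>G\<^esub> (b \<otimes>\<^bsub>G\<^esub> g)" if ph: "\<phi> \<in> cos_aut_stab G H A" for \<phi>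
    proof -
      define \<psi> where "\<psi> = (\<lambda>U. U #>\<^bsub>G\<^esub> inv\<^bsub>G\<^esub> g) \<circ> (\<phi> \<circ> (\<lambda>U. U #>\<^bsub>G\<^esub> g))"
      have pa: "\<phi> \<in> cos_aut G H A" using ph unfolding cos_aut_stab_def by auto
      have "\<psi> \<in> cos_aut G H A" unfolding \<psi>_def
        using comp_aut rmul_aut assms(1,3) gc pa by (metis inv_closed)
      moreover have "\<psi> H = H"
      proof -
        have "\<phi> (H #>\<^bsub>G\<^esub> g) = H #>\<^bsub>G\<^esub> g" using g ph unfolding S_def by blast
        moreover have "(H #>\<^bsub>G\<^esub> g) #>\<^bsub>G\<^esub> inv\<^bsub>G\<^esub> g = H" using gc Hs by (simp add: coset_mult_assoc coset_mult_one)
        ultimately show ?thesis unfolding \<psi>_def by simp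
      qed
      ultimately have "\<psi> \<in> cos_aut_stab G H A" unfolding cos_aut_stab_def by auto
      hence e: "\<psi> (H #>\<^bsub>G\<^esub> b) = H #>\<^bsub>G\<^esub> b" using assms(8) b by auto
      have hb: "H #>\<^bsub>G\<^esub> b #>\<^bsub>G\<^esub> g = H #>\<^bsub>G\<^esub> (b \<otimes>\<^bsub>G\<^esub> g)" using Hs bc gc by (simp add: coset_mult_assoc)
      have hbr: "H #>\<^bsub>G\<^esub> (b \<otimes>\<^bsub>G\<^esub> g) \<in> rcosets\<^bsub>G\<^esub> H" using bc gc unfolding RCOSETS_def by auto
      have "\<phi> (H #>\<^bsub>G\<^esub> (b \<otimes>\<^bsub>G\<^esub> g)) \<in> rcosets\<^bsub>G\<^esub> H" using pa hbr unfolding cos_aut_def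
        using bij_betwE by blast
      hence "\<phi> (H #>\<^bsub>G\<^esub> (b \<otimes>\<^bsub>G\<^esub> g)) #>\<^bsub>G\<^esub> inv\<^bsub>G\<^esub> g #>\<^bsub>G\<^esub> g = \<phi> (H #>\<^bsub>G\<^esub> (b \<otimes>\<^bsub>G\<^esub> g))"
        using rmul_back[OF assms(1,3) inv_closed[OF gc]] gc by simp
      moreover have "\<phi> (H #>\<^bsub>G\<^esub> (b \<otimes>\<^bsub>G\<^esub> g)) #>\<^bsub>G\<^esub> inv\<^bsub>G\<^esub> g = H #>\<^bsub>G\<^esub> b" using e hb unfolding \<psi>_def by simp
      ultimately show ?thesis using hb by simp
    qed
    thus ?thesis unfolding S_def using bc gc by auto
  qed
  have stepI: "inv\<^bsub>G\<^esub> b \<otimes>\<^bsub>G\<^esub> g \<in> S" if b: "b \<in> B" and g: "g \<in> S" for b g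
  proof -
    have bc: "b \<in> carrier G" using b Bc by auto
    have fin: "finite S" using Sc assms(2) finite_subset by blast
    have inj: "inj_on (\<lambda>x. b \<otimes>\<^bsub>G\<^esub> x) S" proof (rule inj_onI)
      fix x y assume "x \<in> S" "y \<in> S" "b \<otimes>\<^bsub>G\<^esub> x = b \<otimes>\<^bsub>G\<^esub> y"
      thus "x = y" using l_cancel[of b x y] bc Sc by blast
    qed
    have "(\<lambda>x. b \<otimes>\<^bsub>G\<^esub> x) ` S \<subseteq> S" using stepB b by auto
    hence "(\<lambda>x. b \<otimes>\<^bsub>G\<^esub> x) ` S = S" using endo_inj_surj[OF fin _ inj] by blast
    have "g \<in> (\<lambda>x. b \<otimes>\<^bsub>G\<^esub> x) ` S" using g \<open>(\<lambda>x. b \<otimes>\<^bsub>G\<^esub> x) ` S = S\<close> by simp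
    then obtain h where h: "h \<in> S" "g = b \<otimes>\<^bsub>G\<^esub> h" by blast
    have hc: "h \<in> carrier G" using h(1) Sc by blast
    have "inv\<^bsub>G\<^esub> b \<otimes>\<^bsub>G\<^esub> g = h" unfolding h(2) using bc hc by (simp add: m_assoc[symmetric])
    thus ?thesis using h by simp
  qed
  have main: "\<forall>g \<in> S. x \<otimes>\<^bsub>G\<^esub> g \<in> S" if "x \<in> generate G B" for x
    using that
  proof (induction x rule: generate.induct)
    case one show ?case
    proof
      fix g assume g: "g \<in> S"
      hence "g \<in> carrier G" using Sc by blast
      thus "\<one>\<^bsub>G\<^esub> \<otimes>\<^bsub>G\<^esub> g \<in> S" using g by simp
    qed
  next
    case (incl h) thus ?case using stepB by blast
  next
    case (inv h) thus ?case using stepI by blast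
  next
    case (eng h1 h2)
    have c: "h1 \<in> carrier G" "h2 \<in> carrier G" using eng.hyps generate_in_carrier[OF Bc] by blast+
    show ?case
    proof
      fix g assume g: "g \<in> S"
      hence "g \<in> carrier G" using Sc by blast
      hence "h1 \<otimes>\<^bsub>G\<^esub> h2 \<otimes>\<^bsub>G\<^esub> g = h1 \<otimes>\<^bsub>G\<^esub> (h2 \<otimes>\<^bsub>G\<^esub> g)" using c m_assoc by blast
      moreover have "h2 \<otimes>\<^bsub>G\<^esub> g \<in> S" using eng.IH(2) g by blast
      ultimately show "h1 \<otimes>\<^bsub>G\<^esub> h2 \<otimes>\<^bsub>G\<^esub> g \<in> S" using eng.IH(1) by simp
    qed
  qed
  have oneS: "\<one>\<^bsub>G\<^esub> \<in> S"
  proof -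
    have "H #>\<^bsub>G\<^esub> \<one>\<^bsub>G\<^esub> = H" using Hs by (simp add: coset_mult_one)
    thus ?thesis unfolding S_def cos_aut_stab_def by simp
  qed
  show ?thesis
  proof (intro ballI)
    fix \<phi> x assume p: "\<phi> \<in> cos_aut_stab G H A" and x: "x \<in> generate G B"
    have "x \<otimes>\<^bsub>G\<^esub> \<one>\<^bsub>G\<^esub> \<in> S" using main[OF x] oneS by blast
    moreover have "x \<in> carrier G" using generate_in_carrier[OF Bc x] .
    ultimately have "x \<in> S" by simp
    thus "\<phi> (H #>\<^bsub>G\<^esub> x) = H #>\<^bsub>G\<^esub> x" using p unfolding S_def by blast
  qed
qed

end
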